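(* Let $\eta\in\mathbb{R}$ and let $U=\mathrm{diag}(1,e^{i\frac{2\pi}{3}\eta})$ be a qubit $Z$-phase gate. Let $\alpha,\beta\in\mathbb{R}$ satisfy $2\alpha-\beta=3k$ for some $k\in\mathbb{Z}$ and $\alpha+\beta=\eta$. Consider the two-qutrit diagonal unitary $W$ which, when the first (control) qutrit is in $\ket{0}$, $\ket{1}$, $\ket{2}$, applies respectively $Z(0,0)$, $Z(2\alpha-\beta,\alpha+\beta)$, $Z(\alpha+\beta,2\beta-\alpha)$ to the second (target) qutrit. Then $W$ emulates the $\ket{2}$-controlled $U$ gate: for every $c\in\{0,1,2\}$ and $t\in\{0,1\}$, $W\ket{c,t}=\ket{c,t}$ if $c\in\{0,1\}$ and $W\ket{2,t}=\ket{2}\otimes U\ket{t}$ (identifying qubit basis states with qutrit basis states of the same label).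
   Context: A qutrit is $\mathbb{C}^3$ with basis $\ket{0},\ket{1},\ket{2}$; $\omega=e^{2\pi i/3}$; for $a,b\in\mathbb{R}$, $Z(a,b)=\mathrm{diag}(1,\omega^a,\omega^b)$. In the paper $W$ is the two-qutrit circuit built from CX gates and $Z(\alpha,\beta)$-type phase gates (a controlled-phase construction from phase gadgets), whose action is as described. *)

theory Defs
  imports Complex_Main
begin

text \<open>States: a qutrit (or qubit) state is a function nat => complex (amplitudes on basis
  labels 0,1,2, resp. 0,1); a two-qutrit state is nat => nat => complex
  (first argument: control label, second: target label).\<close>

definition omega_pow :: "real \<Rightarrow> complex" where
  "omega_pow a = cis (2 * pi * a / 3)"

definition ket :: "nat \<Rightarrow> nat \<Rightarrow> complex" where
  "ket j = (\<lambda>i. if i = j then 1 else 0)"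

definition tensor :: "(nat \<Rightarrow> complex) \<Rightarrow> (nat \<Rightarrow> complex) \<Rightarrow> (nat \<Rightarrow> nat \<Rightarrow> complex)" where
  "tensor \<phi> \<chi> = (\<lambda>c t. \<phi> c * \<chi> t)"

definition Zgate :: "real \<Rightarrow> real \<Rightarrow> (nat \<Rightarrow> complex) \<Rightarrow> (nat \<Rightarrow> complex)" where
  "Zgate a b \<psi> = (\<lambda>j. (if j = 0 then 1 else if j = 1 then omega_pow a else omega_pow b) * \<psi> j)"

definition Ugate :: "real \<Rightarrow> (nat \<Rightarrow> complex) \<Rightarrow> (nat \<Rightarrow> complex)" where
  "Ugate \<eta> \<psi> = (\<lambda>j. (if j = 0 then 1 else cis (2 * pi * \<eta> / 3)) * \<psi> j)"

definition Wgate :: "real \<Rightarrow> real \<Rightarrow> (nat \<Rightarrow> nat \<Rightarrow> complex) \<Rightarrow> (nat \<Rightarrow> nat \<Rightarrow> complex)" where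
  "Wgate \<alpha> \<beta> \<Psi> = (\<lambda>c. (if c = 0 then Zgate 0 0
                           else if c = 1 then Zgate (2 * \<alpha> - \<beta>) (\<alpha> + \<beta>)
                           else Zgate (\<alpha> + \<beta>) (2 * \<beta> - \<alpha>)) (\<Psi> c))"

end

theory Submission
  imports Defs
begin

lemma om_int: "omega_pow (3 * of_int k) = 1"
proof -
  have "2 * pi * (3 * of_int k) / 3 = 2 * pi * of_int k" by simp
  then show ?thesis unfolding omega_pow_def
    using cis_multiple_2pi[of "real_of_int k"] by (simp add: mult.assoc del: cis_multiple_2pi)
qed

theorem mainTheorem4:
  fixes \<eta> \<alpha> \<beta> :: real and k :: int
  assumes "2 * \<alpha> - \<beta> = 3 * of_int k"
    and "\<alpha> + \<beta> = \<eta>"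
  shows "\<forall>c < 3. \<forall>t < 2.
           (c \<in> {0, 1} \<longrightarrow> Wgate \<alpha> \<beta> (tensor (ket c) (ket t)) = tensor (ket c) (ket t)) \<and>
           (c = 2 \<longrightarrow> Wgate \<alpha> \<beta> (tensor (ket 2) (ket t)) = tensor (ket 2) (Ugate \<eta> (ket t)))"
proof -
  have w: "omega_pow (2 * \<alpha> - \<beta>) = 1" using assms(1) om_int by simp
  have u: "omega_pow (\<alpha> + \<beta>) = cis (2 * pi * \<eta> / 3)" using assms(2) by (simp add: omega_pow_def)
  show ?thesis
    using w u by (auto simp: Wgate_def Zgate_def Ugate_def tensor_def ket_def fun_eq_iff omega_pow_def[of 0])
qed

end
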